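(* Let $r\ge 2$ be an even integer and let $u(x,t)$ be a sufficiently smooth (e.g. $C^3$) function on $[a,b]\times I$, $I$ a time interval, with $u(a,t)=u(b,t)=0$. Then the following are equivalent: (i) $u$ satisfies $$\big(|u_x|^{r-2}u_x\big)_{xt}+\big(|u_x|^{r-2}u_x\big)_x u_x+\Big(\big(|u_x|^{r-2}u_x\big)_x u\Big)_x=0;$$ (ii) there is a function $c(t)$ such that $$|u_x|^{r-2}u_{xt}+\frac1r|u_x|^r+|u_x|^{r-2}u_{xx}u=c(t);$$ (iii) there is a function $c(t)$ such that $$\big(|u_x|^{r-2}u_x\big)_t+\big(|u_x|^{r-2}u\,u_x\big)_x=\frac1r|u_x|^r+c(t).$$ (The functions $c(t)$ in (ii) and (iii) need not coincide.)
   Context: Subscripts denote partial derivatives. Equation (i) is called the $r$-Hunter-Saxton equation on $[a,b]$ with boundary conditions $u(a)=u(b)=0$. For $r=2$, (iii) reduces to the Hunter-Saxton equation $(u_t+uu_x)_x=\frac12u_x^2$ (up to the function $c(t)$). *)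

theory Defs
  imports "HOL-Analysis.Analysis"
begin

definition Dx :: "real set \<Rightarrow> (real \<Rightarrow> real \<Rightarrow> real) \<Rightarrow> real \<Rightarrow> real \<Rightarrow> real" where
  "Dx A f x t = vector_derivative (\<lambda>y. f y t) (at x within A)"

definition Dt :: "real set \<Rightarrow> (real \<Rightarrow> real \<Rightarrow> real) \<Rightarrow> real \<Rightarrow> real \<Rightarrow> real" where
  "Dt I f x t = vector_derivative (\<lambda>s. f x s) (at t within I)"

datatype dir = DirX | DirT

fun iterD :: "real set \<Rightarrow> real set \<Rightarrow> dir list \<Rightarrow> (real \<Rightarrow> real \<Rightarrow> real) \<Rightarrow> real \<Rightarrow> real \<Rightarrow> real" where
  "iterD A I [] f = f"
| "iterD A I (DirX # ds) f = Dx A (iterD A I ds f)"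
| "iterD A I (DirT # ds) f = Dt I (iterD A I ds f)"

definition C3_on :: "real set \<Rightarrow> real set \<Rightarrow> (real \<Rightarrow> real \<Rightarrow> real) \<Rightarrow> bool" where
  "C3_on A I u \<longleftrightarrow>
     (\<forall>ds. length ds \<le> 3 \<longrightarrow> continuous_on (A \<times> I) (\<lambda>(x, t). iterD A I ds u x t)) \<and>
     (\<forall>ds. length ds < 3 \<longrightarrow> (\<forall>x\<in>A. \<forall>t\<in>I.
        ((\<lambda>y. iterD A I ds u y t) has_vector_derivative iterD A I (DirX # ds) u x t) (at x within A) \<and>
        ((\<lambda>s. iterD A I ds u x s) has_vector_derivative iterD A I (DirT # ds) u x t) (at t within I)))"

end

theory Submission
  imports Defs
begin


lemma seg_near:
  fixes S :: "real set"
  assumes "is_interval S" "\<exists>s\<in>S. \<exists>t\<in>S. s < t" "x \<in> S" "e > 0"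
  shows "\<exists>y\<in>S. y \<noteq> x \<and> \<bar>y - x\<bar> < e \<and> closed_segment x y \<subseteq> S"
proof -
  obtain s t where st: "s \<in> S" "t \<in> S" "s < t" using assms(2) by blast
  have iv: "\<And>p q z. p \<in> S \<Longrightarrow> q \<in> S \<Longrightarrow> p \<le> z \<Longrightarrow> z \<le> q \<Longrightarrow> z \<in> S"
    using assms(1) unfolding is_interval_1 by blast
  show ?thesis
  proof (cases "x < t")
    case True
    define y where "y = min t (x + e/2)"
    have "y \<in> S" using iv[OF assms(3) st(2)] True assms(4) by (simp add: y_def)
    moreover have "closed_segment x y \<subseteq> S"
      using iv[OF assms(3) st(2)] True assms(4) by (auto simp: closed_segment_eq_real_ivl y_def)
    ultimately show ?thesis using True assms(4) by (intro bexI[of _ y]) (auto simp: y_def)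
  next
    case False
    define y where "y = max s (x - e/2)"
    have "y \<in> S" using iv[OF st(1) assms(3)] False st assms(4) by (simp add: y_def)
    moreover have "closed_segment x y \<subseteq> S"
      using iv[OF st(1) assms(3)] False st assms(4) by (auto simp: closed_segment_eq_real_ivl y_def)
    ultimately show ?thesis using False st assms(4) by (intro bexI[of _ y]) (auto simp: y_def)
  qed
qed

lemma nontriv:
  fixes S :: "real set"
  assumes "is_interval S" "\<exists>s\<in>S. \<exists>t\<in>S. s < t" "x \<in> S"
  shows "at x within S \<noteq> bot"
proof -
  have "x islimpt S" unfolding islimpt_approachable
  proof (intro allI impI)
    fix e :: real assume "e > 0"
    from seg_near[OF assms this] show "\<exists>x'\<in>S. x' \<noteq> x \<and> dist x' x < e"
      by (auto simp: dist_real_def)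
  qed
  then show ?thesis using trivial_limit_within by blast
qed

lemma mvt_seg:
  fixes g g' :: "real \<Rightarrow> real"
  assumes "closed_segment p q \<subseteq> S"
    and "\<And>y. y \<in> closed_segment p q \<Longrightarrow> (g has_field_derivative g' y) (at y within S)"
  shows "\<exists>\<xi>\<in>closed_segment p q. g q - g p = g' \<xi> * (q - p)"
proof (cases "p \<le> q")
  case True
  have "\<exists>x\<in>{p..q}. g q - g p = (\<lambda>h. g' x * h) (q - p)"
    apply (rule mvt_very_simple[OF True])
    using assms True unfolding has_field_derivative_def[symmetric]
    by (auto simp: closed_segment_eq_real_ivl intro: DERIV_subset)
  then show ?thesis using True by (auto simp: closed_segment_eq_real_ivl)
next
  case False
  then have F: "q \<le> p" by simp
  have cs: "closed_segment p q = {q..p}" by (metis closed_segment_commute closed_segment_eq_real_ivl1 F)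
  have "\<exists>x\<in>{q..p}. g p - g q = (\<lambda>h. g' x * h) (p - q)"
    apply (rule mvt_very_simple[OF F])
    using assms F unfolding has_field_derivative_def[symmetric] cs
    by (auto intro: DERIV_subset)
  then obtain x where "x \<in> {q..p}" "g p - g q = g' x * (p - q)" by auto
  then show ?thesis unfolding cs by (intro bexI[of _ x]) (auto simp: algebra_simps)
qed

lemma clairaut:
  fixes v vx vt vxt vtx :: "real \<Rightarrow> real \<Rightarrow> real" and A I :: "real set"
  assumes A: "is_interval A" "\<exists>s\<in>A. \<exists>t\<in>A. s < t"
    and I: "is_interval I" "\<exists>s\<in>I. \<exists>t\<in>I. s < t"
    and dx: "\<And>x t. x \<in> A \<Longrightarrow> t \<in> I \<Longrightarrow> ((\<lambda>y. v y t) has_field_derivative vx x t) (at x within A)"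
    and dt: "\<And>x t. x \<in> A \<Longrightarrow> t \<in> I \<Longrightarrow> ((\<lambda>s. v x s) has_field_derivative vt x t) (at t within I)"
    and dxt: "\<And>x t. x \<in> A \<Longrightarrow> t \<in> I \<Longrightarrow> ((\<lambda>s. vx x s) has_field_derivative vxt x t) (at t within I)"
    and dtx: "\<And>x t. x \<in> A \<Longrightarrow> t \<in> I \<Longrightarrow> ((\<lambda>y. vt y t) has_field_derivative vtx x t) (at x within A)"
    and c1: "continuous_on (A \<times> I) (\<lambda>(x, t). vxt x t)"
    and c2: "continuous_on (A \<times> I) (\<lambda>(x, t). vtx x t)"
    and x0: "x0 \<in> A" and t0: "t0 \<in> I"
  shows "vxt x0 t0 = vtx x0 t0"
proof (rule ccontr)
  assume ne: "vxt x0 t0 \<noteq> vtx x0 t0"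
  define e where "e = \<bar>vxt x0 t0 - vtx x0 t0\<bar> / 2"
  have e: "e > 0" using ne by (simp add: e_def)
  obtain d1 where d1: "d1 > 0" "\<And>p. p \<in> A \<times> I \<Longrightarrow> dist p (x0, t0) < d1 \<Longrightarrow>
      dist ((\<lambda>(x, t). vxt x t) p) ((\<lambda>(x, t). vxt x t) (x0, t0)) < e"
    using c1 x0 t0 e unfolding continuous_on_iff by (metis SigmaI)
  obtain d2 where d2: "d2 > 0" "\<And>p. p \<in> A \<times> I \<Longrightarrow> dist p (x0, t0) < d2 \<Longrightarrow>
      dist ((\<lambda>(x, t). vtx x t) p) ((\<lambda>(x, t). vtx x t) (x0, t0)) < e"
    using c2 x0 t0 e unfolding continuous_on_iff by (metis SigmaI)
  define d where "d = min d1 d2"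
  have d: "d > 0" using d1 d2 by (simp add: d_def)
  obtain x2 where x2: "x2 \<in> A" "x2 \<noteq> x0" "\<bar>x2 - x0\<bar> < d/2" "closed_segment x0 x2 \<subseteq> A"
    using seg_near[OF A x0, of "d/2"] d by auto
  obtain t2 where t2: "t2 \<in> I" "t2 \<noteq> t0" "\<bar>t2 - t0\<bar> < d/2" "closed_segment t0 t2 \<subseteq> I"
    using seg_near[OF I t0, of "d/2"] d by auto
  have close: "dist (\<xi>, \<eta>) (x0, t0) < d" if "\<xi> \<in> closed_segment x0 x2" "\<eta> \<in> closed_segment t0 t2" for \<xi> \<eta>
  proof -
    have "\<bar>\<xi> - x0\<bar> \<le> \<bar>x2 - x0\<bar>" "\<bar>\<eta> - t0\<bar> \<le> \<bar>t2 - t0\<bar>"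
      using that by (auto simp: closed_segment_eq_real_ivl split: if_splits)
    then have "\<bar>\<xi> - x0\<bar> + \<bar>\<eta> - t0\<bar> < d" using x2 t2 by linarith
    moreover have "dist (\<xi>, \<eta>) (x0, t0) \<le> \<bar>\<xi> - x0\<bar> + \<bar>\<eta> - t0\<bar>"
      unfolding dist_Pair_Pair dist_real_def using sqrt_sum_squares_le_sum_abs[of "\<bar>\<xi> - x0\<bar>" "\<bar>\<eta> - t0\<bar>"] by simp
    ultimately show ?thesis by linarith
  qed
  define \<Delta> where "\<Delta> = v x2 t2 - v x2 t0 - v x0 t2 + v x0 t0"
  obtain \<xi> where \<xi>: "\<xi> \<in> closed_segment x0 x2"
    "(\<lambda>y. v y t2 - v y t0) x2 - (\<lambda>y. v y t2 - v y t0) x0 = (vx \<xi> t2 - vx \<xi> t0) * (x2 - x0)"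
  proof -
    have "((\<lambda>y. v y t2 - v y t0) has_field_derivative vx y t2 - vx y t0) (at y within A)"
      if "y \<in> closed_segment x0 x2" for y
      using that x2(4) t2(1) t0 by (intro derivative_intros dx) auto
    from mvt_seg[OF x2(4) this] show ?thesis using that by blast
  qed
  have \<xi>A: "\<xi> \<in> A" using \<xi>(1) x2(4) by blast
  obtain \<eta> where \<eta>: "\<eta> \<in> closed_segment t0 t2" "vx \<xi> t2 - vx \<xi> t0 = vxt \<xi> \<eta> * (t2 - t0)"
    using mvt_seg[OF t2(4), of "\<lambda>s. vx \<xi> s" "\<lambda>s. vxt \<xi> s"] t2(4) \<xi>A by (auto intro!: dxt)
  obtain \<eta>' where \<eta>': "\<eta>' \<in> closed_segment t0 t2"
    "(\<lambda>s. v x2 s - v x0 s) t2 - (\<lambda>s. v x2 s - v x0 s) t0 = (vt x2 \<eta>' - vt x0 \<eta>') * (t2 - t0)"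
  proof -
    have "((\<lambda>s. v x2 s - v x0 s) has_field_derivative vt x2 s - vt x0 s) (at s within I)"
      if "s \<in> closed_segment t0 t2" for s
      using that t2(4) x2(1) x0 by (intro derivative_intros dt) auto
    from mvt_seg[OF t2(4) this] show ?thesis using that by blast
  qed
  have \<eta>'I: "\<eta>' \<in> I" using \<eta>'(1) t2(4) by blast
  obtain \<xi>' where \<xi>': "\<xi>' \<in> closed_segment x0 x2" "vt x2 \<eta>' - vt x0 \<eta>' = vtx \<xi>' \<eta>' * (x2 - x0)"
    using mvt_seg[OF x2(4), of "\<lambda>y. vt y \<eta>'" "\<lambda>y. vtx y \<eta>'"] x2(4) \<eta>'I by (auto intro!: dtx)
  have "\<Delta> = vxt \<xi> \<eta> * ((x2 - x0) * (t2 - t0))" using \<xi>(2) \<eta>(2) by (simp add: \<Delta>_def algebra_simps)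
  moreover have "\<Delta> = vtx \<xi>' \<eta>' * ((x2 - x0) * (t2 - t0))" using \<eta>'(2) \<xi>'(2) by (simp add: \<Delta>_def algebra_simps)
  moreover have "(x2 - x0) * (t2 - t0) \<noteq> 0" using x2(2) t2(2) by simp
  ultimately have eq: "vxt \<xi> \<eta> = vtx \<xi>' \<eta>'" by simp
  have "\<eta> \<in> I" using \<eta>(1) t2(4) by blast
  have "\<xi>' \<in> A" using \<xi>'(1) x2(4) by blast
  have "\<bar>vxt \<xi> \<eta> - vxt x0 t0\<bar> < e"
    using d1(2)[of "(\<xi>, \<eta>)"] close[OF \<xi>(1) \<eta>(1)] \<xi>A \<open>\<eta> \<in> I\<close> by (simp add: d_def dist_real_def)
  moreover have "\<bar>vtx \<xi>' \<eta>' - vtx x0 t0\<bar> < e"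
    using d2(2)[of "(\<xi>', \<eta>')"] close[OF \<xi>'(1) \<eta>'(1)] \<eta>'I \<open>\<xi>' \<in> A\<close> by (simp add: d_def dist_real_def)
  ultimately show False using eq e_def by (auto simp: abs_real_def split: if_splits)
qed

lemma hfd_transform:
  fixes f g :: "real \<Rightarrow> real"
  assumes "x \<in> S" "\<And>y. y \<in> S \<Longrightarrow> g y = f y" "(f has_field_derivative f') (at x within S)"
  shows "(g has_field_derivative f') (at x within S)"
  using assms unfolding has_real_derivative_iff_has_vector_derivative
  by (rule has_vector_derivative_transform)

lemma vd_val:
  fixes f :: "real \<Rightarrow> real"
  assumes "at x within S \<noteq> bot" "(f has_field_derivative f') (at x within S)"
  shows "vector_derivative f (at x within S) = f'"
  using assms unfolding has_real_derivative_iff_has_vector_derivative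
  by (rule vector_derivative_within)



theorem mainTheorem1:
  fixes r :: nat and a b :: real and I :: "real set" and u :: "real \<Rightarrow> real \<Rightarrow> real"
  assumes "r \<ge> 2" and "even r" and "a < b"
    and "is_interval I" and "\<exists>s\<in>I. \<exists>t\<in>I. s < t"
    and "C3_on {a..b} I u"
    and "\<forall>t\<in>I. u a t = 0 \<and> u b t = 0"
  shows "((\<forall>x\<in>{a..b}. \<forall>t\<in>I.
             Dt I (Dx {a..b} (\<lambda>x t. \<bar>Dx {a..b} u x t\<bar> ^ (r - 2) * Dx {a..b} u x t)) x t
           + Dx {a..b} (\<lambda>x t. \<bar>Dx {a..b} u x t\<bar> ^ (r - 2) * Dx {a..b} u x t) x t * Dx {a..b} u x t
           + Dx {a..b} (\<lambda>x t. Dx {a..b} (\<lambda>x t. \<bar>Dx {a..b} u x t\<bar> ^ (r - 2) * Dx {a..b} u x t) x t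
                                * u x t) x t = 0)
         \<longleftrightarrow>
          (\<exists>c :: real \<Rightarrow> real. \<forall>x\<in>{a..b}. \<forall>t\<in>I.
             \<bar>Dx {a..b} u x t\<bar> ^ (r - 2) * Dt I (Dx {a..b} u) x t
           + 1 / real r * \<bar>Dx {a..b} u x t\<bar> ^ r
           + \<bar>Dx {a..b} u x t\<bar> ^ (r - 2) * Dx {a..b} (Dx {a..b} u) x t * u x t = c t))
       \<and>
         ((\<exists>c :: real \<Rightarrow> real. \<forall>x\<in>{a..b}. \<forall>t\<in>I.
             \<bar>Dx {a..b} u x t\<bar> ^ (r - 2) * Dt I (Dx {a..b} u) x t
           + 1 / real r * \<bar>Dx {a..b} u x t\<bar> ^ r
           + \<bar>Dx {a..b} u x t\<bar> ^ (r - 2) * Dx {a..b} (Dx {a..b} u) x t * u x t = c t)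
         \<longleftrightarrow>
          (\<exists>c :: real \<Rightarrow> real. \<forall>x\<in>{a..b}. \<forall>t\<in>I.
             Dt I (\<lambda>x t. \<bar>Dx {a..b} u x t\<bar> ^ (r - 2) * Dx {a..b} u x t) x t
           + Dx {a..b} (\<lambda>x t. \<bar>Dx {a..b} u x t\<bar> ^ (r - 2) * u x t * Dx {a..b} u x t) x t
           = 1 / real r * \<bar>Dx {a..b} u x t\<bar> ^ r + c t))"
proof -
  define A where "A = {a..b}"
  define P where "P = r - 2"
  have rP: "r = Suc (Suc P)" using assms(1) by (simp add: P_def)
  have evP: "even P" using assms(1,2) by (simp add: P_def)
  define w where "w = Dx A u"
  define wx where "wx = Dx A w"
  define wt where "wt = Dt I w"
  define wxx where "wxx = Dx A wx"
  define wxt where "wxt = Dt I wx"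
  define wtx where "wtx = Dx A wt"
  have Aiv: "is_interval A" "\<exists>s\<in>A. \<exists>t\<in>A. s < t" proof -
    show "is_interval A" by (simp add: A_def is_interval_cc)
    show "\<exists>s\<in>A. \<exists>t\<in>A. s < t" using assms(3) unfolding A_def
      by (intro bexI[of _ a] bexI[of _ b]) auto
  qed
  have aA: "a \<in> A" using assms(3) by (simp add: A_def)
  have Iiv: "is_interval I" "\<exists>s\<in>I. \<exists>t\<in>I. s < t" using assms(4,5) by auto
  have ntA: "\<And>x. x \<in> A \<Longrightarrow> at x within A \<noteq> bot" using nontriv[OF Aiv] by blast
  have ntI: "\<And>t. t \<in> I \<Longrightarrow> at t within I \<noteq> bot" using nontriv[OF Iiv] by blast
  have valX: "\<And>f f' x t. x \<in> A \<Longrightarrow> ((\<lambda>y. f y t) has_field_derivative f') (at x within A) \<Longrightarrow> Dx A f x t = f'"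
    unfolding Dx_def using ntA vd_val by blast
  have valT: "\<And>f f' x t. t \<in> I \<Longrightarrow> ((\<lambda>s. f x s) has_field_derivative f') (at t within I) \<Longrightarrow> Dt I f x t = f'"
    unfolding Dt_def using ntI vd_val by blast
  have C: "\<And>ds x t. length ds < 3 \<Longrightarrow> x \<in> A \<Longrightarrow> t \<in> I \<Longrightarrow>
      ((\<lambda>y. iterD A I ds u y t) has_field_derivative iterD A I (DirX # ds) u x t) (at x within A) \<and>
      ((\<lambda>s. iterD A I ds u x s) has_field_derivative iterD A I (DirT # ds) u x t) (at t within I)"
    using assms(6) unfolding C3_on_def A_def has_real_derivative_iff_has_vector_derivative by blast
  have Cc: "\<And>ds. length ds \<le> 3 \<Longrightarrow> continuous_on (A \<times> I) (\<lambda>(x, t). iterD A I ds u x t)"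
    using assms(6) unfolding C3_on_def A_def by blast
  have ux: "\<And>x t. x \<in> A \<Longrightarrow> t \<in> I \<Longrightarrow> ((\<lambda>y. u y t) has_field_derivative w x t) (at x within A)"
    using C[of "[]"] by (simp add: w_def)
  have wX: "\<And>x t. x \<in> A \<Longrightarrow> t \<in> I \<Longrightarrow> ((\<lambda>y. w y t) has_field_derivative wx x t) (at x within A)"
    using C[of "[DirX]"] by (simp add: w_def wx_def)
  have wT: "\<And>x t. x \<in> A \<Longrightarrow> t \<in> I \<Longrightarrow> ((\<lambda>s. w x s) has_field_derivative wt x t) (at t within I)"
    using C[of "[DirX]"] by (simp add: w_def wt_def)
  have wxX: "\<And>x t. x \<in> A \<Longrightarrow> t \<in> I \<Longrightarrow> ((\<lambda>y. wx y t) has_field_derivative wxx x t) (at x within A)"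
    using C[of "[DirX, DirX]"] by (simp add: w_def wx_def wxx_def)
  have wxT: "\<And>x t. x \<in> A \<Longrightarrow> t \<in> I \<Longrightarrow> ((\<lambda>s. wx x s) has_field_derivative wxt x t) (at t within I)"
    using C[of "[DirX, DirX]"] by (simp add: w_def wx_def wxt_def)
  have wtX: "\<And>x t. x \<in> A \<Longrightarrow> t \<in> I \<Longrightarrow> ((\<lambda>y. wt y t) has_field_derivative wtx x t) (at x within A)"
    using C[of "[DirT, DirX]"] by (simp add: w_def wt_def wtx_def)
  have c1: "continuous_on (A \<times> I) (\<lambda>(x, t). wxt x t)"
    using Cc[of "[DirT, DirX, DirX]"] by (simp add: w_def wx_def wxt_def)
  have c2: "continuous_on (A \<times> I) (\<lambda>(x, t). wtx x t)"
    using Cc[of "[DirX, DirT, DirX]"] by (simp add: w_def wt_def wtx_def)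
  have sym: "\<And>x t. x \<in> A \<Longrightarrow> t \<in> I \<Longrightarrow> wxt x t = wtx x t"
    by (rule clairaut[OF Aiv Iiv wX wT wxT wtX c1 c2])
  have absP: "\<And>z::real. \<bar>z\<bar> ^ (r - 2) = z ^ P" using evP by (simp add: P_def power_even_abs)
  have absr: "\<And>z::real. \<bar>z\<bar> ^ r = z ^ r" using assms(2) by (simp add: power_even_abs)
  define Fx where "Fx = (\<lambda>x t. real P * (wx x t * w x t ^ (P - Suc 0)) * w x t + wx x t * w x t ^ P)"
  define Fxt where "Fxt = (\<lambda>x t. real P * (wxt x t * w x t ^ (P - Suc 0) + real (P - Suc 0) * (wt x t * w x t ^ (P - Suc 0 - Suc 0)) * wx x t) * w x t
       + real P * (wx x t * w x t ^ (P - Suc 0)) * wt x t + (wxt x t * w x t ^ P + real P * (wt x t * w x t ^ (P - Suc 0)) * wx x t))"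
  define Fxx where "Fxx = (\<lambda>x t. real P * (wxx x t * w x t ^ (P - Suc 0) + real (P - Suc 0) * (wx x t * w x t ^ (P - Suc 0 - Suc 0)) * wx x t) * w x t
       + real P * (wx x t * w x t ^ (P - Suc 0)) * wx x t + (wxx x t * w x t ^ P + real P * (wx x t * w x t ^ (P - Suc 0)) * wx x t))"
  define E where "E = (\<lambda>x t. w x t ^ P * wt x t + 1 / real r * w x t ^ r + w x t ^ P * wx x t * u x t)"
  define Ex where "Ex = (\<lambda>x t. real P * (wx x t * w x t ^ (P - Suc 0)) * wt x t + wtx x t * w x t ^ P
      + 1 / real r * (real r * (wx x t * w x t ^ (r - Suc 0)))
      + ((real P * (wx x t * w x t ^ (P - Suc 0)) * wx x t + wxx x t * w x t ^ P) * u x t + w x t * (w x t ^ P * wx x t)))"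
  define Ft where "Ft = (\<lambda>x t. real P * (wt x t * w x t ^ (P - Suc 0)) * w x t + wt x t * w x t ^ P)"
  define Gx where "Gx = (\<lambda>x t. (real P * (wx x t * w x t ^ (P - Suc 0)) * u x t + w x t * w x t ^ P) * w x t + wx x t * (w x t ^ P * u x t))"
  have dF: "\<And>x t. x \<in> A \<Longrightarrow> t \<in> I \<Longrightarrow> ((\<lambda>y. w y t ^ P * w y t) has_field_derivative Fx x t) (at x within A)"
    unfolding Fx_def by (auto intro!: derivative_eq_intros wX)
  have DF: "\<And>x t. x \<in> A \<Longrightarrow> t \<in> I \<Longrightarrow> Dx A (\<lambda>x t. w x t ^ P * w x t) x t = Fx x t"
    by (rule valX) (auto intro: dF)
  have dFt: "\<And>x t. x \<in> A \<Longrightarrow> t \<in> I \<Longrightarrow> ((\<lambda>s. Fx x s) has_field_derivative Fxt x t) (at t within I)"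
    unfolding Fx_def Fxt_def by (auto intro!: derivative_eq_intros wT wxT)
  have i1: "\<And>x t. x \<in> A \<Longrightarrow> t \<in> I \<Longrightarrow> Dt I (Dx A (\<lambda>x t. w x t ^ P * w x t)) x t = Fxt x t"
    by (rule valT, assumption, rule hfd_transform[OF _ _ dFt], auto simp: DF)
  have dFx: "\<And>x t. x \<in> A \<Longrightarrow> t \<in> I \<Longrightarrow> ((\<lambda>y. Fx y t * u y t) has_field_derivative Fxx x t * u x t + w x t * Fx x t) (at x within A)"
    unfolding Fx_def Fxx_def by (auto intro!: derivative_eq_intros wX wxX ux)
  have i3: "\<And>x t. x \<in> A \<Longrightarrow> t \<in> I \<Longrightarrow> Dx A (\<lambda>x t. Dx A (\<lambda>x t. w x t ^ P * w x t) x t * u x t) x t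
      = Fxx x t * u x t + w x t * Fx x t"
    by (rule valX, assumption, rule hfd_transform[OF _ _ dFx], auto simp: DF)
  have dE: "\<And>x t. x \<in> A \<Longrightarrow> t \<in> I \<Longrightarrow> ((\<lambda>y. E y t) has_field_derivative Ex x t) (at x within A)"
    unfolding E_def Ex_def by (auto intro!: derivative_eq_intros wX wxX ux wtX)
  have iii1: "\<And>x t. x \<in> A \<Longrightarrow> t \<in> I \<Longrightarrow> Dt I (\<lambda>x t. w x t ^ P * w x t) x t = Ft x t"
    unfolding Ft_def by (rule valT, assumption, auto intro!: derivative_eq_intros wT)
  have iii2: "\<And>x t. x \<in> A \<Longrightarrow> t \<in> I \<Longrightarrow> Dx A (\<lambda>x t. w x t ^ P * u x t * w x t) x t = Gx x t"
    unfolding Gx_def by (rule valX, assumption, auto intro!: derivative_eq_intros wX ux)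
  have rc: "\<And>z. 1 / real r * (real r * z) = z" using assms(1) by simp
  have I1: "\<And>x t. x \<in> A \<Longrightarrow> t \<in> I \<Longrightarrow> Fxt x t + Fx x t * w x t + (Fxx x t * u x t + w x t * Fx x t) = real (Suc P) * Ex x t"
  proof -
    fix x t assume xt: "x \<in> A" "t \<in> I"
    show "Fxt x t + Fx x t * w x t + (Fxx x t * u x t + w x t * Fx x t) = real (Suc P) * Ex x t"
    proof (cases P)
      case 0
      then show ?thesis unfolding Ex_def rc using sym[OF xt] rP by (simp add: Fxt_def Fx_def Fxx_def Ex_def algebra_simps)
    next
      case (Suc Q)
      then show ?thesis unfolding Ex_def rc using sym[OF xt] rP
        by (cases Q) (simp_all add: Fxt_def Fx_def Fxx_def Ex_def algebra_simps)
    qed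
  qed
  have rr: "real r = real P + 2" using rP by simp
  have rnz: "real P + 2 \<noteq> 0" by (simp add: add_nonneg_eq_0_iff)
  have hr: "\<And>z. 1 / real r * z + real (Suc P) * (1 / real r * z) = z"
  proof -
    fix z
    have "1 / real r * z + real (Suc P) * (1 / real r * z) = (1 + real (Suc P)) * (1 / real r * z)"
      by (simp only: distrib_right mult_1_left)
    also have "1 + real (Suc P) = real r" using rP by simp
    finally show "1 / real r * z + real (Suc P) * (1 / real r * z) = z" using rc by simp
  qed
  have I3: "\<And>x t. Ft x t + Gx x t = 1 / real r * w x t ^ r + real (Suc P) * E x t"
  proof -
    fix x t
    have "1 / real r * w x t ^ r + real (Suc P) * E x t
       = real (Suc P) * (w x t ^ P * wt x t + w x t ^ P * wx x t * u x t)
         + (1 / real r * w x t ^ r + real (Suc P) * (1 / real r * w x t ^ r))"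
      unfolding E_def by (simp only: algebra_simps)
    also have "\<dots> = real (Suc P) * (w x t ^ P * wt x t + w x t ^ P * wx x t * u x t) + w x t ^ r"
      by (simp only: hr)
    also have "\<dots> = Ft x t + Gx x t"
    proof (cases P)
      case 0
      then show ?thesis using rP by (simp add: Ft_def Gx_def algebra_simps power2_eq_square)
    next
      case (Suc Q)
      then show ?thesis using rP by (simp add: Ft_def Gx_def algebra_simps)
    qed
    finally show "Ft x t + Gx x t = 1 / real r * w x t ^ r + real (Suc P) * E x t" by simp
  qed
  have eqi: "\<And>x t. x \<in> A \<Longrightarrow> t \<in> I \<Longrightarrow>
      Dt I (Dx A (\<lambda>x t. w x t ^ P * w x t)) x t + Dx A (\<lambda>x t. w x t ^ P * w x t) x t * w x t
      + Dx A (\<lambda>x t. Dx A (\<lambda>x t. w x t ^ P * w x t) x t * u x t) x t = real (Suc P) * Ex x t"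
    using i1 DF i3 I1 by simp
  have cvA: "convex A" by (simp add: A_def)
  have key1: "(\<forall>x\<in>A. \<forall>t\<in>I.
      Dt I (Dx A (\<lambda>x t. w x t ^ P * w x t)) x t + Dx A (\<lambda>x t. w x t ^ P * w x t) x t * w x t
      + Dx A (\<lambda>x t. Dx A (\<lambda>x t. w x t ^ P * w x t) x t * u x t) x t = 0)
      \<longleftrightarrow> (\<exists>c. \<forall>x\<in>A. \<forall>t\<in>I. E x t = c t)"
  proof
    assume H: "\<forall>x\<in>A. \<forall>t\<in>I.
      Dt I (Dx A (\<lambda>x t. w x t ^ P * w x t)) x t + Dx A (\<lambda>x t. w x t ^ P * w x t) x t * w x t
      + Dx A (\<lambda>x t. Dx A (\<lambda>x t. w x t ^ P * w x t) x t * u x t) x t = 0"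
    have Ex0: "Ex x t = 0" if xA: "x \<in> A" and tI: "t \<in> I" for x t
    proof -
      have "real (Suc P) * Ex x t = 0" using H xA tI eqi[OF xA tI] by simp
      then show ?thesis by simp
    qed
    have "\<forall>x\<in>A. \<forall>t\<in>I. E x t = E a t"
    proof (intro ballI)
      fix x t assume xA: "x \<in> A" and tI: "t \<in> I"
      have "\<And>y. y \<in> A \<Longrightarrow> ((\<lambda>y. E y t) has_field_derivative 0) (at y within A)"
        using dE[OF _ tI] Ex0[OF _ tI] by metis
      then have "\<exists>c. \<forall>y\<in>A. E y t = c"
        using has_field_derivative_zero_constant[OF cvA, of "\<lambda>y. E y t"] by blast
      then obtain c where "\<forall>y\<in>A. E y t = c" by blast
      then show "E x t = E a t" using xA aA by simp
    qed
    then show "\<exists>c. \<forall>x\<in>A. \<forall>t\<in>I. E x t = c t" by blast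
  next
    assume "\<exists>c. \<forall>x\<in>A. \<forall>t\<in>I. E x t = c t"
    then obtain c where c: "\<forall>x\<in>A. \<forall>t\<in>I. E x t = c t" by blast
    show "\<forall>x\<in>A. \<forall>t\<in>I.
      Dt I (Dx A (\<lambda>x t. w x t ^ P * w x t)) x t + Dx A (\<lambda>x t. w x t ^ P * w x t) x t * w x t
      + Dx A (\<lambda>x t. Dx A (\<lambda>x t. w x t ^ P * w x t) x t * u x t) x t = 0"
    proof (intro ballI)
      fix x t assume xA: "x \<in> A" and tI: "t \<in> I"
      have "((\<lambda>y. E y t) has_field_derivative 0) (at x within A)"
        by (rule hfd_transform[OF xA, of _ "\<lambda>y. c t"]) (use c tI in auto)
      then have "Ex x t = 0" using has_field_derivative_unique[OF dE[OF xA tI] _ ntA[OF xA]] by blast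
      then show "Dt I (Dx A (\<lambda>x t. w x t ^ P * w x t)) x t + Dx A (\<lambda>x t. w x t ^ P * w x t) x t * w x t
      + Dx A (\<lambda>x t. Dx A (\<lambda>x t. w x t ^ P * w x t) x t * u x t) x t = 0" using eqi[OF xA tI] by simp
    qed
  qed
  have key2: "(\<exists>c. \<forall>x\<in>A. \<forall>t\<in>I. E x t = c t) \<longleftrightarrow>
     (\<exists>c. \<forall>x\<in>A. \<forall>t\<in>I. Dt I (\<lambda>x t. w x t ^ P * w x t) x t + Dx A (\<lambda>x t. w x t ^ P * u x t * w x t) x t
        = 1 / real r * w x t ^ r + c t)"
  proof
    assume "\<exists>c. \<forall>x\<in>A. \<forall>t\<in>I. E x t = c t"
    then obtain c where c: "\<forall>x\<in>A. \<forall>t\<in>I. E x t = c t" by blast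
    show "\<exists>c. \<forall>x\<in>A. \<forall>t\<in>I. Dt I (\<lambda>x t. w x t ^ P * w x t) x t + Dx A (\<lambda>x t. w x t ^ P * u x t * w x t) x t
        = 1 / real r * w x t ^ r + c t"
      by (rule exI[of _ "\<lambda>t. real (Suc P) * c t"]) (use c iii1 iii2 I3 in simp)
  next
    assume "\<exists>c. \<forall>x\<in>A. \<forall>t\<in>I. Dt I (\<lambda>x t. w x t ^ P * w x t) x t + Dx A (\<lambda>x t. w x t ^ P * u x t * w x t) x t
        = 1 / real r * w x t ^ r + c t"
    then obtain c where c: "\<forall>x\<in>A. \<forall>t\<in>I. Dt I (\<lambda>x t. w x t ^ P * w x t) x t + Dx A (\<lambda>x t. w x t ^ P * u x t * w x t) x t
        = 1 / real r * w x t ^ r + c t" by blast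
    have "\<forall>x\<in>A. \<forall>t\<in>I. E x t = c t / real (Suc P)"
    proof (intro ballI)
      fix x t assume xA: "x \<in> A" and tI: "t \<in> I"
      have "real (Suc P) * E x t = c t" using c xA tI iii1 iii2 I3[of x t] by simp
      then show "E x t = c t / real (Suc P)" by (simp add: field_simps)
    qed
    then show "\<exists>c. \<forall>x\<in>A. \<forall>t\<in>I. E x t = c t" by (intro exI[of _ "\<lambda>t. c t / real (Suc P)"])
  qed
  show ?thesis
    unfolding A_def[symmetric] w_def[symmetric] unfolding wx_def[symmetric] wt_def[symmetric] absP absr
    apply (rule conjI)
     apply (rule key1[unfolded E_def])
    apply (rule key2[unfolded E_def])
    done
qed

end
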